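(* Let $X$ be a regular space. If $t(Q_{P}(X))=\aleph_0$, then $X$ is a Lindelöf space.
   Context: A function $f\colon X\to Y$ between topological spaces is quasi-continuous at $x\in X$ if for every open $U\ni x$ and every open $V\ni f(x)$ there is a non-empty open $G\subseteq U$ with $f(G)\subseteq V$; $f$ is quasi-continuous if it is so at every point. $Q_{P}(X)$ is the set of quasi-continuous functions $X\to\mathbb{R}$ with the topology of point-wise convergence (subspace topology from $\mathbb{R}^X$). The tightness of a space $Z$ is $t(Z)=\sup_{z\in Z} t(z,Z)$, where $t(z,Z)=\aleph_0+\sup\{a(z,A): A\subseteq Z,\ z\in\overline{A}\}$ and $a(z,A)=\min\{|B|: B\subseteq A,\ z\in\overline{B}\}$. A space is Lindelöf if every open cover has a countable subcover. *)

theory Defs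
  imports "HOL-Analysis.Analysis"
begin

definition quasi_continuous_at :: "'a topology \<Rightarrow> ('a \<Rightarrow> real) \<Rightarrow> 'a \<Rightarrow> bool" where
  "quasi_continuous_at X f x \<equiv>
     \<forall>U V. openin X U \<and> x \<in> U \<and> open V \<and> f x \<in> V \<longrightarrow>
       (\<exists>G. openin X G \<and> G \<noteq> {} \<and> G \<subseteq> U \<and> f ` G \<subseteq> V)"

definition quasi_continuous :: "'a topology \<Rightarrow> ('a \<Rightarrow> real) \<Rightarrow> bool" where
  "quasi_continuous X f \<equiv> \<forall>x \<in> topspace X. quasi_continuous_at X f x"

text \<open>Q_P(X): quasi-continuous real functions on X with the topology of pointwise
  convergence, i.e. the subspace of R^X (product topology over the carrier of X;
  functions are represented extensionally, with value undefined off the carrier).\<close>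
definition QP :: "'a topology \<Rightarrow> ('a \<Rightarrow> real) topology" where
  "QP X = subtopology (product_topology (\<lambda>_. euclideanreal) (topspace X))
                      {f. quasi_continuous X f}"

definition countable_tightness :: "'b topology \<Rightarrow> bool" where
  "countable_tightness Z \<equiv>
     \<forall>z A. A \<subseteq> topspace Z \<and> z \<in> Z closure_of A \<longrightarrow>
       (\<exists>B. B \<subseteq> A \<and> countable B \<and> z \<in> Z closure_of B)"

end

theory Submission
  imports Defs
begin

lemma fin_cover:
  assumes reg: "regular_space X" and U: "\<forall>U\<in>\<U>. openin X U" "\<Union>\<U> = topspace X"
    and "finite F" "F \<subseteq> topspace X"
  shows "\<exists>V \<V>. openin X V \<and> F \<subseteq> V \<and> finite \<V> \<and> \<V> \<subseteq> \<U> \<and> X closure_of V \<subseteq> \<Union>\<V>"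
  using assms(4,5)
proof (induction F rule: finite_induct)
  case empty
  have "openin X {} \<and> {} \<subseteq> {} \<and> finite {} \<and> {} \<subseteq> \<U> \<and> X closure_of {} \<subseteq> \<Union>{}" by simp
  then show ?case by (intro exI[of _ "{}"])
next
  case (insert x F)
  have xF: "x \<in> topspace X" "F \<subseteq> topspace X" using insert.prems by auto
  obtain V \<V> where V: "openin X V" "F \<subseteq> V" "finite \<V>" "\<V> \<subseteq> \<U>" "X closure_of V \<subseteq> \<Union>\<V>"
    using insert.IH[OF xF(2)] by blast
  have "x \<in> \<Union>\<U>" using xF(1) U(2) by simp
  then obtain W where W: "W \<in> \<U>" "x \<in> W" by blast
  have "openin X W" using W U by blast
  then obtain A C where AC: "openin X A" "closedin X C" "x \<in> A" "A \<subseteq> C" "C \<subseteq> W"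
  proof -
    have "neighbourhood_base_of (closedin X) X" using reg neighbourhood_base_of_closedin by blast
    then have "\<forall>W x. openin X W \<and> x \<in> W
          \<longrightarrow> (\<exists>U V. openin X U \<and> closedin X V \<and> x \<in> U \<and> U \<subseteq> V \<and> V \<subseteq> W)"
      unfolding neighbourhood_base_of .
    then show ?thesis using \<open>openin X W\<close> W(2) that by blast
  qed
  have "X closure_of A \<subseteq> W" using AC closure_of_minimal[of A C X] by blast
  have "openin X (V \<union> A)" using V(1) AC(1) by (rule openin_Un)
  moreover have "insert x F \<subseteq> V \<union> A" using V(2) AC(3) by blast
  moreover have "finite (insert W \<V>)" using V(3) by simp
  moreover have "insert W \<V> \<subseteq> \<U>" using V(4) W(1) by blast
  moreover have "X closure_of (V \<union> A) \<subseteq> \<Union>(insert W \<V>)"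
    using V(5) \<open>X closure_of A \<subseteq> W\<close> by auto
  ultimately show ?case by (intro exI[of _ "V \<union> A"] exI[of _ "insert W \<V>"] conjI)
qed

lemma qc_ind:
  assumes "openin X V"
  shows "quasi_continuous X (restrict (\<lambda>x. if x \<in> X closure_of V then 1 else 0) (topspace X))"
  unfolding quasi_continuous_def quasi_continuous_at_def
proof (intro ballI allI impI)
  fix x U and W :: "real set"
  define f where "f = restrict (\<lambda>x. if x \<in> X closure_of V then 1 else (0::real)) (topspace X)"
  assume x: "x \<in> topspace X" and h: "openin X U \<and> x \<in> U \<and> open W \<and>
     restrict (\<lambda>x. if x \<in> X closure_of V then 1 else 0) (topspace X) x \<in> W"
  have hU: "openin X U" "x \<in> U" and hW: "f x \<in> W" using h by (auto simp: f_def)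
  have Ut: "U \<subseteq> topspace X" using hU openin_subset by blast
  have "\<exists>G. openin X G \<and> G \<noteq> {} \<and> G \<subseteq> U \<and> f ` G \<subseteq> W"
  proof (cases "x \<in> X closure_of V")
    case True
    then obtain y where y: "y \<in> V" "y \<in> U" using hU by (auto simp: in_closure_of)
    have Vc: "V \<subseteq> X closure_of V" using assms
      by (simp add: closure_of_subset openin_subset)
    have "f x = 1" using True x by (simp add: f_def)
    moreover have "f z = 1" if "z \<in> U \<inter> V" for z using that Vc Ut by (auto simp: f_def)
    ultimately have "f ` (U \<inter> V) \<subseteq> W" using hW by auto
    moreover have "openin X (U \<inter> V)" using hU(1) assms by (rule openin_Int)
    ultimately show ?thesis using y by (intro exI[of _ "U \<inter> V"]) blast
  next
    case False
    have o: "openin X (U - X closure_of V)" using hU(1) by (simp add: openin_diff)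
    have "f x = 0" using False x by (simp add: f_def)
    moreover have "f z = 0" if "z \<in> U - X closure_of V" for z using that Ut by (auto simp: f_def)
    ultimately have "f ` (U - X closure_of V) \<subseteq> W" using hW by auto
    then show ?thesis using o False hU by (intro exI[of _ "U - X closure_of V"]) blast
  qed
  then show "\<exists>G. openin X G \<and> G \<noteq> {} \<and> G \<subseteq> U \<and>
     restrict (\<lambda>x. if x \<in> X closure_of V then 1 else 0) (topspace X) ` G \<subseteq> W"
    unfolding f_def .
qed

theorem mainTheorem3:
  fixes X :: "'a topology"
  assumes "regular_space X" and "t1_space X"
    and "countable_tightness (QP X)"
  shows "Lindelof_space X"
  unfolding Lindelof_space_def
proof (intro allI impI)
  fix \<U> assume U: "(\<forall>U\<in>\<U>. openin X U) \<and> \<Union>\<U> = topspace X"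
  show "\<exists>\<V>. countable \<V> \<and> \<V> \<subseteq> \<U> \<and> \<Union>\<V> = topspace X"
  proof (rule ccontr)
    assume nc: "\<not> (\<exists>\<V>. countable \<V> \<and> \<V> \<subseteq> \<U> \<and> \<Union>\<V> = topspace X)"
    define P where "P = product_topology (\<lambda>_. euclideanreal) (topspace X)"
    define g where "g = restrict (\<lambda>_. 1::real) (topspace X)"
    define A where "A = {f \<in> topspace (QP X). \<exists>\<V>. finite \<V> \<and> \<V> \<subseteq> \<U> \<and>
                           (\<forall>x\<in>topspace X - \<Union>\<V>. f x = 0)}"
    have QPP: "QP X = subtopology P {f. quasi_continuous X f}"
      unfolding QP_def P_def ..
    have tQP: "topspace (QP X) = {f \<in> topspace P. quasi_continuous X f}"
      unfolding QPP by auto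
    have tP: "topspace P = PiE (topspace X) (\<lambda>_. UNIV)"
      unfolding P_def by simp
    have gq: "quasi_continuous X g"
      unfolding quasi_continuous_def quasi_continuous_at_def
    proof (intro ballI allI impI)
      fix x U and W :: "real set"
      assume x: "x \<in> topspace X" and h: "openin X U \<and> x \<in> U \<and> open W \<and> g x \<in> W"
      have "U \<subseteq> topspace X" using h openin_subset by blast
      then have "g ` U \<subseteq> W" using h x by (auto simp: g_def)
      then show "\<exists>G. openin X G \<and> G \<noteq> {} \<and> G \<subseteq> U \<and> g ` G \<subseteq> W"
        using h by (intro exI[of _ U]) blast
    qed
    have gP: "g \<in> topspace P" unfolding tP g_def by simp
    have gt: "g \<in> topspace (QP X)" unfolding tQP using gq gP by simp
    have Asub: "A \<subseteq> topspace (QP X)" unfolding A_def by auto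
    have gA: "g \<in> QP X closure_of A"
      unfolding in_closure_of
    proof (intro conjI allI impI gt)
      fix T assume T: "g \<in> T \<and> openin (QP X) T"
      then obtain T' where T': "openin P T'" "T = T' \<inter> {f. quasi_continuous X f}"
        unfolding QPP openin_subtopology by blast
      have "g \<in> T'" using T T' by blast
      then obtain W where W: "finite {i \<in> topspace X. W i \<noteq> UNIV}"
         "g \<in> PiE (topspace X) W" "PiE (topspace X) W \<subseteq> T'"
        using T'(1) unfolding P_def openin_product_topology_alt by force
      obtain V \<V> where V: "openin X V" "{i \<in> topspace X. W i \<noteq> UNIV} \<subseteq> V" "finite \<V>"
        "\<V> \<subseteq> \<U>" "X closure_of V \<subseteq> \<Union>\<V>"
      proof -
        have U1: "\<forall>U\<in>\<U>. openin X U" and U2: "\<Union>\<U> = topspace X" using U by auto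
        have "{i \<in> topspace X. W i \<noteq> UNIV} \<subseteq> topspace X" by blast
        from fin_cover[OF assms(1) U1 U2 W(1) this] show ?thesis using that by blast
      qed
      define f where "f = restrict (\<lambda>x. if x \<in> X closure_of V then 1 else (0::real)) (topspace X)"
      have fq: "quasi_continuous X f" unfolding f_def by (rule qc_ind[OF V(1)])
      have Vc: "V \<subseteq> X closure_of V" using V(1) by (simp add: closure_of_subset openin_subset)
      have "f i \<in> W i" if "i \<in> topspace X" for i
      proof (cases "W i = UNIV")
        case False
        then have "i \<in> X closure_of V" using V(2) that Vc by blast
        moreover have "g i \<in> W i" using W(2) that by blast
        ultimately show ?thesis using that unfolding f_def g_def by simp
      qed simp
      moreover have "f \<in> extensional (topspace X)" unfolding f_def by simp
      ultimately have fW: "f \<in> PiE (topspace X) W" by (simp add: PiE_iff)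
      then have fT: "f \<in> T" using T' W(3) fq by blast
      have "f \<in> topspace P" unfolding tP using fW by (simp add: PiE_iff)
      then have ft: "f \<in> topspace (QP X)" unfolding tQP using fq by simp
      have "\<forall>x\<in>topspace X - \<Union>\<V>. f x = 0" using V(5) by (auto simp: f_def)
      then have "f \<in> A" unfolding A_def using ft V(3,4) by blast
      then show "\<exists>y. y \<in> A \<and> y \<in> T" using fT by blast
    qed
    then obtain B where B: "B \<subseteq> A" "countable B" "g \<in> QP X closure_of B"
      using assms(3) Asub unfolding countable_tightness_def by blast
    have "\<forall>f\<in>B. \<exists>\<V>. finite \<V> \<and> \<V> \<subseteq> \<U> \<and> (\<forall>x\<in>topspace X - \<Union>\<V>. f x = 0)"
      using B(1) unfolding A_def by blast
    then obtain VV where VV: "\<And>f. f \<in> B \<Longrightarrow> finite (VV f) \<and> VV f \<subseteq> \<U> \<and>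
         (\<forall>x\<in>topspace X - \<Union>(VV f). f x = 0)" by metis
    have "countable (\<Union>(VV ` B))"
    proof (rule countable_UN[OF B(2)])
      fix f assume "f \<in> B" then show "countable (VV f)" using VV countable_finite by blast
    qed
    moreover have VVU: "\<Union>(VV ` B) \<subseteq> \<U>" using VV by blast
    ultimately have "\<Union>(\<Union>(VV ` B)) \<noteq> topspace X" using nc by blast
    moreover have "\<Union>(\<Union>(VV ` B)) \<subseteq> topspace X" using U VVU by blast
    ultimately obtain x where x: "x \<in> topspace X" "x \<notin> \<Union>(\<Union>(VV ` B))" by blast
    define T where "T = {h \<in> topspace (QP X). h x \<in> {1/2<..}}"
    have "continuous_map P euclideanreal (\<lambda>h. h x)"
      unfolding P_def by (rule continuous_map_product_projection, rule x(1))
    then have "continuous_map (QP X) euclideanreal (\<lambda>h. h x)"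
      unfolding QPP by (rule continuous_map_from_subtopology)
    then have "openin (QP X) T" unfolding T_def
      by (rule openin_continuous_map_preimage) simp
    moreover have "g \<in> T" unfolding T_def using gt x by (simp add: g_def)
    ultimately obtain h where h: "h \<in> B" "h \<in> T" using B(3) unfolding in_closure_of by blast
    have "\<forall>y\<in>topspace X - \<Union>(VV h). h y = 0" using VV[OF h(1)] by blast
    moreover have "x \<in> topspace X - \<Union>(VV h)" using x h(1) by blast
    ultimately have "h x = 0" by blast
    then show False using h(2) unfolding T_def by simp
  qed
qed

end
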